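(* Let $J\subseteq S$ and $w\in\mathfrak{S}_n^J$. Then $w$ is $(J,231)$-avoiding if and only if $\mathrm{inv}(w)$ is $J$-compressed.
   Context: $\mathfrak{S}_n$ is the symmetric group on $[n]$, $s_i=(i,i+1)$, $S=\{s_1,\dots,s_{n-1}\}$, one-line notation $w=w_1\cdots w_n$, $\mathrm{inv}(w)=\{(i,j):i<j,\ w_i>w_j\}$, and $\mathrm{des}(w)=\{(i,j)\in\mathrm{inv}(w): w_i=w_j+1\}$. For $J\subseteq S$, $\mathfrak{S}_n^J$ is the set of $w$ with $w_i<w_{i+1}$ whenever $s_i\in J$ (the minimal length coset representatives, $w<_S ws$ for $s\in J$ in the weak order $u\le_S v\iff\mathrm{inv}(u)\subseteq\mathrm{inv}(v)$). Writing $J=S\setminus\{s_{j_1},\dots,s_{j_r}\}$ with $j_1<\dots<j_r$, the $J$-regions are $\{1,\dots,j_1\},\{j_1+1,\dots,j_2\},\dots,\{j_r+1,\dots,n\}$. $w\in\mathfrak{S}_n^J$ is $(J,231)$-avoiding if there are no indices $i<j<k$ in pairwise different $J$-regions with $w_k<w_i<w_j$ and $w_i=w_k+1$. The set $\mathrm{inv}(w)$ is $J$-compressed if whenever $i<j<k$ lie in pairwise different $J$-regions and $(i,k)\in\mathrm{des}(w)$, then $(i,j)\in\mathrm{inv}(w)$. *)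

theory Defs
  imports "HOL-Combinatorics.Combinatorics"
begin

text \<open>Permutations w of [n] are functions with w permutes {1..n}; the one-line
 notation is w 1, ..., w n.\<close>

definition simple_refl :: "nat \<Rightarrow> (nat \<Rightarrow> nat)" where
  "simple_refl i = transpose i (Suc i)"

definition simple_refls :: "nat \<Rightarrow> (nat \<Rightarrow> nat) set" where
  "simple_refls n = {simple_refl i | i. 1 \<le> i \<and> i < n}"

definition inv_set :: "nat \<Rightarrow> (nat \<Rightarrow> nat) \<Rightarrow> (nat \<times> nat) set" where
  "inv_set n w = {(i, j). 1 \<le> i \<and> i < j \<and> j \<le> n \<and> w i > w j}"

definition des_set :: "nat \<Rightarrow> (nat \<Rightarrow> nat) \<Rightarrow> (nat \<times> nat) set" where
  "des_set n w = {(i, j) \<in> inv_set n w. w i = w j + 1}"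

definition parabolic_quot :: "nat \<Rightarrow> (nat \<Rightarrow> nat) set \<Rightarrow> (nat \<Rightarrow> nat) set" where
  "parabolic_quot n J = {w. w permutes {1..n} \<and>
      (\<forall>i. 1 \<le> i \<and> i < n \<and> simple_refl i \<in> J \<longrightarrow> w i < w (Suc i))}"

definition same_region :: "(nat \<Rightarrow> nat) set \<Rightarrow> nat \<Rightarrow> nat \<Rightarrow> bool" where
  "same_region J i j = (\<forall>k. i \<le> k \<and> k < j \<longrightarrow> simple_refl k \<in> J)"

definition J231_avoiding :: "nat \<Rightarrow> (nat \<Rightarrow> nat) set \<Rightarrow> (nat \<Rightarrow> nat) \<Rightarrow> bool" where
  "J231_avoiding n J w = (\<not> (\<exists>i j k. 1 \<le> i \<and> i < j \<and> j < k \<and> k \<le> n \<and>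
      \<not> same_region J i j \<and> \<not> same_region J j k \<and> \<not> same_region J i k \<and>
      w k < w i \<and> w i < w j \<and> w i = w k + 1))"

definition J_compressed :: "nat \<Rightarrow> (nat \<Rightarrow> nat) set \<Rightarrow> (nat \<Rightarrow> nat) \<Rightarrow> bool" where
  "J_compressed n J w = (\<forall>i j k. 1 \<le> i \<and> i < j \<and> j < k \<and> k \<le> n \<and>
      \<not> same_region J i j \<and> \<not> same_region J j k \<and> \<not> same_region J i k \<and>
      (i, k) \<in> des_set n w \<longrightarrow> (i, j) \<in> inv_set n w)"

end

theory Submission
  imports Defs
begin

theorem lemma3p7:
  fixes n :: nat and J :: "(nat \<Rightarrow> nat) set" and w :: "nat \<Rightarrow> nat"
  assumes "J \<subseteq> simple_refls n"
    and "w \<in> parabolic_quot n J"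
  shows "J231_avoiding n J w \<longleftrightarrow> J_compressed n J w"
proof -
  have "w permutes {1..n}" using assms(2) by (simp add: parabolic_quot_def)
  then have inj: "inj w" by (rule permutes_inj)
  have ne: "\<And>i j. i < j \<Longrightarrow> w i \<noteq> w j" using inj by (metis inj_eq less_irrefl)
  let ?R = "\<lambda>i j k. 1 \<le> i \<and> i < j \<and> j < k \<and> k \<le> n \<and>
      \<not> same_region J i j \<and> \<not> same_region J j k \<and> \<not> same_region J i k"
  have A: "J231_avoiding n J w = (\<forall>i j k. ?R i j k \<longrightarrow> \<not> (w k < w i \<and> w i < w j \<and> w i = w k + 1))"
    unfolding J231_avoiding_def by blast
  have B: "J_compressed n J w = (\<forall>i j k. ?R i j k \<longrightarrow> (w i > w k \<and> w i = w k + 1) \<longrightarrow> w i > w j)"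
  proof -
    have m1: "\<And>a b. (a, b) \<in> inv_set n w \<longleftrightarrow> 1 \<le> a \<and> a < b \<and> b \<le> n \<and> w a > w b"
      unfolding inv_set_def by simp
    have m2: "\<And>a b. (a, b) \<in> des_set n w \<longleftrightarrow> (a, b) \<in> inv_set n w \<and> w a = w b + 1"
      unfolding des_set_def by simp
    show ?thesis unfolding J_compressed_def m2
    proof (intro iff_allI iffI impI)
      fix i j k assume h: "1 \<le> i \<and> i < j \<and> j < k \<and> k \<le> n \<and>
      \<not> same_region J i j \<and> \<not> same_region J j k \<and> \<not> same_region J i k \<and> ((i, k) \<in> inv_set n w \<and> w i = w k + 1) \<longrightarrow> (i, j) \<in> inv_set n w"
        and r: "?R i j k" and d: "w k < w i \<and> w i = w k + 1"
      from r d have "(i, k) \<in> inv_set n w" unfolding m1 by simp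
      with h r d have "(i, j) \<in> inv_set n w" by blast
      then show "w j < w i" unfolding m1 by simp
    next
      fix i j k assume h: "?R i j k \<longrightarrow> w k < w i \<and> w i = w k + 1 \<longrightarrow> w j < w i"
        and r: "1 \<le> i \<and> i < j \<and> j < k \<and> k \<le> n \<and>
      \<not> same_region J i j \<and> \<not> same_region J j k \<and> \<not> same_region J i k \<and> ((i, k) \<in> inv_set n w \<and> w i = w k + 1)"
      from r have "(i, k) \<in> inv_set n w" by blast
      then have "w k < w i" unfolding m1 by blast
      with h r have "w j < w i" by blast
      with r show "(i, j) \<in> inv_set n w" unfolding m1 by simp
    qed
  qed
  show ?thesis unfolding A B
  proof (intro iffI allI impI)
    fix i j k assume h: "\<forall>i j k. ?R i j k \<longrightarrow> \<not> (w k < w i \<and> w i < w j \<and> w i = w k + 1)"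
      and r: "?R i j k" and d: "w i > w k \<and> w i = w k + 1"
    from r have "w i \<noteq> w j" using ne by blast
    with h r d show "w i > w j" by (meson linorder_neqE_nat)
  next
    fix i j k assume h: "\<forall>i j k. ?R i j k \<longrightarrow> (w i > w k \<and> w i = w k + 1) \<longrightarrow> w i > w j"
      and r: "?R i j k"
    show "\<not> (w k < w i \<and> w i < w j \<and> w i = w k + 1)"
      using h r by (meson less_asym)
  qed
qed

end
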